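(* If $\mathbf{C}$ is a propositional Hilbert-type calculus whose set of theorems $\mathrm{Thm}(\mathbf{C})$ is undecidable, then $\mathbf{C}$ is not effectively approximable.
   Context: A propositional language has variables $X_1,X_2,\ldots$ and finitely many connectives with arities. A substitution $\sigma$ maps variables to formulas; $F\sigma$ denotes simultaneous replacement. A propositional Hilbert-type calculus $\mathbf{C}$ is given by a finite set of axioms and a finite set of rules (premises $A_1,\ldots,A_n$, conclusion $C$). A derivation is a finite sequence of formulas each of which is a substitution instance of an axiom or is $C\sigma$ for some rule and substitution $\sigma$ with all $A_j\sigma$ occurring earlier; $\mathrm{Thm}(\mathbf{C})$ is the set of derivable formulas. A finite-valued logic $\mathbf{M}$ is given by a finite set $V(\mathbf{M})$ of truth values, designated values $V^+(\mathbf{M})$, and a truth function for each connective; valuations map variables to truth values and extend to formulas; a valuation satisfies $F$ if $F$ is designated; a tautology is a formula satisfied by every valuation; $\mathrm{Taut}(\mathbf{M})$ is the set of tautologies; $\mathbf{M}_1\unlhd\mathbf{M}_2$ means $\mathrm{Taut}(\mathbf{M}_1)\subseteq\mathrm{Taut}(\mathbf{M}_2)$. $\mathbf{M}$ is a cover for $\mathbf{C}$ if all axioms of $\mathbf{C}$ are tautologies of $\mathbf{M}$ and for every rule every valuation satisfying all premises satisfies the conclusion. $\mathbf{C}$ is effectively approximable if there is an effectively enumerated sequence $\langle\mathbf{M}_1,\mathbf{M}_2,\ldots\rangle$ of covers of $\mathbf{C}$ such that $\mathbf{M}_i\unlhd\mathbf{M}_j$ whenever $i\ge j$ and $\mathrm{Thm}(\mathbf{C})=\bigcap_j\mathrm{Taut}(\mathbf{M}_j)$.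 *)

theory Defs
  imports Main "HOL-Library.Nat_Bijection"
begin

text \<open>A language is given by a list of arities: connective number c (for c < length ar)
has arity ar ! c. Variables X_1, X_2, ... are represented as Var n.\<close>

datatype form = Var nat | App nat "form list"

fun wf_form :: "nat list \<Rightarrow> form \<Rightarrow> bool" where
  "wf_form ar (Var n) = True"
| "wf_form ar (App c args) =
     (c < length ar \<and> length args = ar ! c \<and> (\<forall>a\<in>set args. wf_form ar a))"

fun subst :: "(nat \<Rightarrow> form) \<Rightarrow> form \<Rightarrow> form" where
  "subst \<sigma> (Var n) = \<sigma> n"
| "subst \<sigma> (App c args) = App c (map (subst \<sigma>) args)"

definition wf_subst :: "nat list \<Rightarrow> (nat \<Rightarrow> form) \<Rightarrow> bool" where
  "wf_subst ar \<sigma> \<longleftrightarrow> (\<forall>n. wf_form ar (\<sigma> n))"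

record calc =
  axioms :: "form list"
  rules :: "(form list \<times> form) list"

definition calculus :: "nat list \<Rightarrow> calc \<Rightarrow> bool" where
  "calculus ar C \<longleftrightarrow> (\<forall>A\<in>set (axioms C). wf_form ar A) \<and>
     (\<forall>(ps, c)\<in>set (rules C). wf_form ar c \<and> (\<forall>p\<in>set ps. wf_form ar p))"

definition derivation :: "nat list \<Rightarrow> calc \<Rightarrow> form list \<Rightarrow> bool" where
  "derivation ar C ds \<longleftrightarrow> (\<forall>i < length ds.
     (\<exists>A\<in>set (axioms C). \<exists>\<sigma>. wf_subst ar \<sigma> \<and> ds ! i = subst \<sigma> A) \<or>
     (\<exists>(ps, c)\<in>set (rules C). \<exists>\<sigma>. wf_subst ar \<sigma> \<and> ds ! i = subst \<sigma> c \<and>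
         (\<forall>p\<in>set ps. subst \<sigma> p \<in> set (take i ds))))"

definition Thm :: "nat list \<Rightarrow> calc \<Rightarrow> form set" where
  "Thm ar C = {F. \<exists>ds. derivation ar C ds \<and> F \<in> set ds}"

record matrix =
  nv :: nat
  des :: "nat set"
  tf :: "nat \<Rightarrow> nat list \<Rightarrow> nat"

definition is_logic :: "nat list \<Rightarrow> matrix \<Rightarrow> bool" where
  "is_logic ar M \<longleftrightarrow> 1 \<le> nv M \<and> des M \<subseteq> {..<nv M} \<and>
     (\<forall>c xs. c < length ar \<and> length xs = ar ! c \<and> set xs \<subseteq> {..<nv M} \<longrightarrow> tf M c xs < nv M)"

fun eval :: "matrix \<Rightarrow> (nat \<Rightarrow> nat) \<Rightarrow> form \<Rightarrow> nat" where
  "eval M v (Var n) = v n"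
| "eval M v (App c args) = tf M c (map (eval M v) args)"

definition valuation :: "matrix \<Rightarrow> (nat \<Rightarrow> nat) \<Rightarrow> bool" where
  "valuation M v \<longleftrightarrow> (\<forall>n. v n < nv M)"

definition satisfies :: "matrix \<Rightarrow> (nat \<Rightarrow> nat) \<Rightarrow> form \<Rightarrow> bool" where
  "satisfies M v F \<longleftrightarrow> eval M v F \<in> des M"

definition Taut :: "nat list \<Rightarrow> matrix \<Rightarrow> form set" where
  "Taut ar M = {F. wf_form ar F \<and> (\<forall>v. valuation M v \<longrightarrow> satisfies M v F)}"

definition cover :: "nat list \<Rightarrow> calc \<Rightarrow> matrix \<Rightarrow> bool" where
  "cover ar C M \<longleftrightarrow> is_logic ar M \<and>
     (\<forall>A\<in>set (axioms C). A \<in> Taut ar M) \<and>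
     (\<forall>(ps, c)\<in>set (rules C). \<forall>v. valuation M v \<longrightarrow>
         (\<forall>p\<in>set ps. satisfies M v p) \<longrightarrow> satisfies M v c)"

datatype recf = Zr | Sc | Id nat | Cn recf "recf list" | Pr recf recf | Mn recf

inductive rec_eval :: "recf \<Rightarrow> nat list \<Rightarrow> nat \<Rightarrow> bool" where
  zero: "rec_eval Zr xs 0"
| succ: "rec_eval Sc (x # xs) (Suc x)"
| proj: "i < length xs \<Longrightarrow> rec_eval (Id i) xs (xs ! i)"
| comp: "length ys = length gs \<Longrightarrow> (\<forall>i < length gs. rec_eval (gs ! i) xs (ys ! i)) \<Longrightarrow>
         rec_eval f ys y \<Longrightarrow> rec_eval (Cn f gs) xs y"
| prim0: "rec_eval f xs y \<Longrightarrow> rec_eval (Pr f g) (0 # xs) y"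
| primS: "rec_eval (Pr f g) (n # xs) y \<Longrightarrow> rec_eval g (n # y # xs) z \<Longrightarrow>
         rec_eval (Pr f g) (Suc n # xs) z"
| mini: "rec_eval f (n # xs) 0 \<Longrightarrow> (\<forall>m < n. \<exists>k. rec_eval f (m # xs) (Suc k)) \<Longrightarrow>
         rec_eval (Mn f) xs n"

definition decidable :: "nat set \<Rightarrow> bool" where
  "decidable A \<longleftrightarrow> (\<exists>r. \<forall>x. rec_eval r [x] (if x \<in> A then 1 else 0))"

fun form_enc :: "form \<Rightarrow> nat" where
  "form_enc (Var n) = prod_encode (0, n)"
| "form_enc (App c args) = prod_encode (Suc c, list_encode (map form_enc args))"

definition effective_seq :: "nat list \<Rightarrow> (nat \<Rightarrow> matrix) \<Rightarrow> bool" where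
  "effective_seq ar M \<longleftrightarrow>
     (\<exists>r. \<forall>i. rec_eval r [i] (nv (M i))) \<and>
     (\<exists>r. \<forall>i x. x < nv (M i) \<longrightarrow> rec_eval r [i, x] (if x \<in> des (M i) then 1 else 0)) \<and>
     (\<exists>r. \<forall>i c xs. c < length ar \<and> length xs = ar ! c \<and> set xs \<subseteq> {..<nv (M i)} \<longrightarrow>
          rec_eval r [i, c, list_encode xs] (tf (M i) c xs))"

definition effectively_approximable :: "nat list \<Rightarrow> calc \<Rightarrow> bool" where
  "effectively_approximable ar C \<longleftrightarrow> (\<exists>M :: nat \<Rightarrow> matrix.
     effective_seq ar M \<and> (\<forall>j. cover ar C (M j)) \<and>
     (\<forall>i j. j \<le> i \<longrightarrow> Taut ar (M i) \<subseteq> Taut ar (M j)) \<and>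
     Thm ar C = (\<Inter>j. Taut ar (M j)))"

end

theory Submission
  imports Defs
begin


definition rcl :: "nat \<Rightarrow> (nat list \<Rightarrow> nat) \<Rightarrow> bool" where
  "rcl n f \<longleftrightarrow> (\<exists>r. \<forall>xs. length xs = n \<longrightarrow> rec_eval r xs (f xs))"

lemma rcl_cong: "rcl n f \<Longrightarrow> (\<And>xs. length xs = n \<Longrightarrow> f xs = g xs) \<Longrightarrow> rcl n g"
  unfolding rcl_def by metis

lemma rcl_proj: "i < n \<Longrightarrow> rcl n (\<lambda>xs. xs ! i)"
  unfolding rcl_def by (auto intro!: exI[of _ "Id i"] rec_eval.proj)

lemma rcl_zero: "rcl n (\<lambda>xs. 0)"
  unfolding rcl_def by (auto intro!: exI[of _ Zr] rec_eval.zero)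

lemma rcl_comp:
  assumes "rcl m f" "length gs = m" "\<forall>g\<in>set gs. rcl n g"
  shows "rcl n (\<lambda>xs. f (map (\<lambda>g. g xs) gs))"
proof -
  obtain rf where rf: "\<forall>xs. length xs = m \<longrightarrow> rec_eval rf xs (f xs)"
    using assms(1) unfolding rcl_def by blast
  from assms(3) have "\<forall>g\<in>set gs. \<exists>r. \<forall>xs. length xs = n \<longrightarrow> rec_eval r xs (g xs)"
    unfolding rcl_def by blast
  then obtain R where R: "\<forall>g\<in>set gs. \<forall>xs. length xs = n \<longrightarrow> rec_eval (R g) xs (g xs)"
    by metis
  show ?thesis unfolding rcl_def
  proof (intro exI allI impI)
    fix xs :: "nat list" assume len: "length xs = n"
    show "rec_eval (Cn rf (map R gs)) xs (f (map (\<lambda>g. g xs) gs))"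
      by (rule rec_eval.comp[where ys = "map (\<lambda>g. g xs) gs"]) (use R rf assms(2) len in auto)
  qed
qed

lemma rcl_comp1: "rcl 1 f \<Longrightarrow> rcl n g \<Longrightarrow> rcl n (\<lambda>xs. f [g xs])"
  using rcl_comp[of 1 f "[g]" n] by simp

lemma rcl_comp2: "rcl 2 f \<Longrightarrow> rcl n g \<Longrightarrow> rcl n h \<Longrightarrow> rcl n (\<lambda>xs. f [g xs, h xs])"
  using rcl_comp[of 2 f "[g, h]" n] by simp

lemma rcl_comp3: "rcl 3 f \<Longrightarrow> rcl n g \<Longrightarrow> rcl n h \<Longrightarrow> rcl n k \<Longrightarrow> rcl n (\<lambda>xs. f [g xs, h xs, k xs])"
  using rcl_comp[of 3 f "[g, h, k]" n] by (simp add: numeral_3_eq_3)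

lemma rcl_succ: "rcl 1 (\<lambda>xs. Suc (xs ! 0))"
  unfolding rcl_def
proof (intro exI allI impI)
  fix xs :: "nat list" assume "length xs = 1"
  then obtain x where "xs = [x]" by (cases xs) auto
  then show "rec_eval Sc xs (Suc (xs ! 0))" by (simp add: rec_eval.succ)
qed

lemma rcl_pr:
  assumes "rcl n f" "rcl (Suc (Suc n)) g"
  shows "rcl (Suc n) (\<lambda>xs. rec_nat (f (tl xs)) (\<lambda>k acc. g (k # acc # tl xs)) (hd xs))"
proof -
  obtain rf where rf: "\<forall>xs. length xs = n \<longrightarrow> rec_eval rf xs (f xs)"
    using assms(1) unfolding rcl_def by blast
  obtain rg where rg: "\<forall>xs. length xs = Suc (Suc n) \<longrightarrow> rec_eval rg xs (g xs)"
    using assms(2) unfolding rcl_def by blast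
  have *: "rec_eval (Pr rf rg) (k # xs) (rec_nat (f xs) (\<lambda>k acc. g (k # acc # xs)) k)"
    if "length xs = n" for k xs
  proof (induction k)
    case 0 then show ?case using rf that by (auto intro: rec_eval.prim0)
  next
    case (Suc k) then show ?case using rg that by (auto intro: rec_eval.primS)
  qed
  show ?thesis unfolding rcl_def
  proof (intro exI allI impI)
    fix xs :: "nat list" assume "length xs = Suc n"
    then obtain k ys where "xs = k # ys" "length ys = n" by (cases xs) auto
    then show "rec_eval (Pr rf rg) xs (rec_nat (f (tl xs)) (\<lambda>k acc. g (k # acc # tl xs)) (hd xs))"
      using * by simp
  qed
qed

lemma rcl_mn:
  assumes "rcl (Suc n) f" "\<forall>xs. length xs = n \<longrightarrow> (\<exists>y. f (y # xs) = 0)"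
  shows "rcl n (\<lambda>xs. LEAST y. f (y # xs) = 0)"
proof -
  obtain rf where rf: "\<forall>xs. length xs = Suc n \<longrightarrow> rec_eval rf xs (f xs)"
    using assms(1) unfolding rcl_def by blast
  show ?thesis unfolding rcl_def
  proof (intro exI allI impI)
    fix xs :: "nat list" assume len: "length xs = n"
    let ?L = "LEAST y. f (y # xs) = 0"
    have L: "f (?L # xs) = 0" using assms(2) len by (metis (mono_tags, lifting) LeastI)
    have "\<forall>m < ?L. \<exists>k. rec_eval rf (m # xs) (Suc k)"
    proof (intro allI impI)
      fix m assume "m < ?L"
      then have "f (m # xs) \<noteq> 0" using not_less_Least by blast
      then obtain k where "f (m # xs) = Suc k" using not0_implies_Suc by blast
      then show "\<exists>k. rec_eval rf (m # xs) (Suc k)" using rf len by (metis length_Cons)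
    qed
    then show "rec_eval (Mn rf) xs ?L"
      using L rf len by (intro rec_eval.mini) (auto, metis length_Cons)
  qed
qed


lemma rcl_pr2:
  assumes "rcl n f" "rcl (Suc (Suc n)) g" "m = Suc n"
    "\<And>xs. length xs = m \<Longrightarrow> rec_nat (f (tl xs)) (\<lambda>k acc. g (k # acc # tl xs)) (hd xs) = h xs"
  shows "rcl m h"
  using rcl_cong[OF rcl_pr[OF assms(1,2)]] assms(3,4) by auto


lemma len1E: "length xs = Suc 0 \<Longrightarrow> (\<And>a. xs = [a] \<Longrightarrow> P) \<Longrightarrow> P"
  by (cases xs) auto
lemma len2E: "length xs = 2 \<Longrightarrow> (\<And>a b. xs = [a, b] \<Longrightarrow> P) \<Longrightarrow> P"
  by (cases xs; cases "tl xs") auto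
lemma len3E: "length xs = 3 \<Longrightarrow> (\<And>a b c. xs = [a, b, c] \<Longrightarrow> P) \<Longrightarrow> P"
  by (cases xs; cases "tl xs"; cases "tl (tl xs)") (auto simp: numeral_3_eq_3)
lemma len1: "length xs = 1 \<Longrightarrow> xs = [xs ! 0]"
  by (cases xs) auto
lemma len2: "length xs = 2 \<Longrightarrow> xs = [xs ! 0, xs ! 1]"
  by (cases xs; cases "tl xs") auto
lemma len3: "length xs = 3 \<Longrightarrow> xs = [xs ! 0, xs ! 1, xs ! 2]"
  by (cases xs; cases "tl xs"; cases "tl (tl xs)") (auto simp: numeral_3_eq_3)

lemma rcl_binop:
  assumes "rcl 2 (\<lambda>xs. h (xs ! 0) (xs ! 1))" "rcl n f" "rcl n g"
  shows "rcl n (\<lambda>xs. h (f xs) (g xs))"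
  using rcl_comp2[OF assms] by simp

lemma rcl_unop:
  assumes "rcl 1 (\<lambda>xs. h (xs ! 0))" "rcl n f"
  shows "rcl n (\<lambda>xs. h (f xs))"
  using rcl_comp1[OF assms] by simp

lemma rcl_Suc: "rcl n f \<Longrightarrow> rcl n (\<lambda>xs. Suc (f xs))"
  by (rule rcl_unop[OF rcl_succ])

lemma rec_nat_add: "rec_nat a (\<lambda>k acc. Suc acc) n = n + a"
  by (induction n) auto

lemma rcl_add2: "rcl 2 (\<lambda>xs. xs ! 0 + xs ! 1)"
proof -
  have f: "rcl 1 (\<lambda>ys. ys ! 0)" by (rule rcl_proj) simp
  have g: "rcl (Suc (Suc 1)) (\<lambda>ys. Suc (ys ! 1))" by (rule rcl_Suc[OF rcl_proj]) simp
  show ?thesis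
    by (rule rcl_pr2[OF f g]) (auto simp: rec_nat_add elim!: len2E)
qed

lemma rcl_add: "rcl n f \<Longrightarrow> rcl n g \<Longrightarrow> rcl n (\<lambda>xs. f xs + g xs)"
  by (rule rcl_binop[OF rcl_add2])

lemma rec_nat_pred: "rec_nat 0 (\<lambda>k acc. k) n = n - 1"
  by (cases n) auto

lemma rcl_pred1: "rcl 1 (\<lambda>xs. xs ! 0 - 1)"
proof -
  have f: "rcl 0 (\<lambda>ys. 0)" by (rule rcl_zero)
  have g: "rcl (Suc (Suc 0)) (\<lambda>ys. ys ! 0)" by (rule rcl_proj) simp
  show ?thesis
    by (rule rcl_pr2[OF f g]) (auto simp: rec_nat_pred elim!: len1E)
qed

lemma rcl_pred: "rcl n f \<Longrightarrow> rcl n (\<lambda>xs. f xs - 1)"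
  by (rule rcl_unop[OF rcl_pred1])

lemma rec_nat_sub: "rec_nat a (\<lambda>k acc. acc - Suc 0) n = a - n"
  by (induction n) auto

lemma rcl_sub2: "rcl 2 (\<lambda>xs. xs ! 0 - xs ! 1)"
proof -
  have f: "rcl 1 (\<lambda>ys. ys ! 0)" by (rule rcl_proj) simp
  have g: "rcl (Suc (Suc 1)) (\<lambda>ys. ys ! 1 - 1)" by (rule rcl_pred[OF rcl_proj]) simp
  have "rcl 2 (\<lambda>xs. xs ! 1 - xs ! 0)"
    by (rule rcl_pr2[OF f g]) (auto simp: rec_nat_sub elim!: len2E)
  from rcl_binop[OF this, of 2 "\<lambda>xs. xs ! 1" "\<lambda>xs. xs ! 0"] show ?thesis
    by (simp add: rcl_proj)
qed

lemma rcl_sub: "rcl n f \<Longrightarrow> rcl n g \<Longrightarrow> rcl n (\<lambda>xs. f xs - g xs)"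
  by (rule rcl_binop[OF rcl_sub2])

lemma rec_nat_mult: "rec_nat 0 (\<lambda>k acc. acc + a) n = n * a"
  by (induction n) auto

lemma rcl_mult2: "rcl 2 (\<lambda>xs. xs ! 0 * xs ! 1)"
proof -
  have f: "rcl 1 (\<lambda>ys. 0)" by (rule rcl_zero)
  have g: "rcl (Suc (Suc 1)) (\<lambda>ys. ys ! 1 + ys ! 2)" by (rule rcl_add; rule rcl_proj; simp)
  show ?thesis
    by (rule rcl_pr2[OF f g]) (auto simp: rec_nat_mult elim!: len2E)
qed

lemma rcl_mult: "rcl n f \<Longrightarrow> rcl n g \<Longrightarrow> rcl n (\<lambda>xs. f xs * g xs)"
  by (rule rcl_binop[OF rcl_mult2])

lemma rec_nat_tri: "rec_nat 0 (\<lambda>k acc. Suc (acc + k)) n = triangle n"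
  by (induction n) auto

lemma rcl_tri1: "rcl 1 (\<lambda>xs. triangle (xs ! 0))"
proof -
  have f: "rcl 0 (\<lambda>ys. 0)" by (rule rcl_zero)
  have g: "rcl (Suc (Suc 0)) (\<lambda>ys. ys ! 1 + Suc (ys ! 0))"
    by (rule rcl_add rcl_Suc rcl_proj | simp)+
  show ?thesis
    by (rule rcl_pr2[OF f g]) (auto simp: rec_nat_tri elim!: len1E)
qed

lemma rcl_tri: "rcl n f \<Longrightarrow> rcl n (\<lambda>xs. triangle (f xs))"
  by (rule rcl_unop[OF rcl_tri1])

lemma rcl_const: "rcl n (\<lambda>xs. k)"
  by (induction k) (auto intro: rcl_zero rcl_Suc)

lemma rcl_pe: "rcl n f \<Longrightarrow> rcl n g \<Longrightarrow> rcl n (\<lambda>xs. prod_encode (f xs, g xs))"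
  unfolding prod_encode_def by (simp add: rcl_add rcl_tri)

lemma triangle_mono: "m \<le> n \<Longrightarrow> triangle m \<le> triangle n"
  by (induction n rule: dec_induct) auto

definition pd1 :: "nat \<Rightarrow> nat" where "pd1 n = fst (prod_decode n)"
definition pd2 :: "nat \<Rightarrow> nat" where "pd2 n = snd (prod_decode n)"

lemma pd1_pe[simp]: "pd1 (prod_encode (a, b)) = a" by (simp add: pd1_def)
lemma pd2_pe[simp]: "pd2 (prod_encode (a, b)) = b" by (simp add: pd2_def)
lemma pe_pd[simp]: "prod_encode (pd1 n, pd2 n) = n" by (simp add: pd1_def pd2_def)

definition tsum :: "nat \<Rightarrow> nat" where "tsum n = (LEAST y. n < triangle (Suc y))"

lemma tsum_eq: "tsum n = pd1 n + pd2 n"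
proof -
  obtain a b where ab: "prod_decode n = (a, b)" by (cases "prod_decode n")
  have n: "triangle (a + b) + a = n"
    using prod_decode_inverse[of n] ab by (simp add: prod_encode_def)
  show ?thesis unfolding tsum_def pd1_def pd2_def ab fst_conv snd_conv
  proof (rule Least_equality)
    show "n < triangle (Suc (a + b))" using n triangle_Suc[of "a + b"] by linarith
    fix y assume "n < triangle (Suc y)"
    then show "a + b \<le> y"
      using n triangle_mono[of "Suc y" "a + b"] by (cases "a + b \<le> y") linarith+
  qed
qed

lemma pd1_tsum: "pd1 n = n - triangle (tsum n)"
proof -
  have "triangle (pd1 n + pd2 n) + pd1 n = n"
    using pe_pd[of n] unfolding prod_encode_def by simp
  then show ?thesis unfolding tsum_eq by linarith
qed

lemma pd2_tsum: "pd2 n = tsum n - pd1 n"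
  by (simp add: tsum_eq)

lemma rcl_tsum1: "rcl 1 (\<lambda>xs. tsum (xs ! 0))"
proof -
  have f: "rcl (Suc 1) (\<lambda>xs. 1 - (triangle (Suc (xs ! 0)) - xs ! 1))"
    by (rule rcl_sub rcl_const rcl_tri rcl_Suc rcl_proj | simp)+
  have "rcl 1 (\<lambda>xs. LEAST y. (1 - (triangle (Suc ((y # xs) ! 0)) - (y # xs) ! 1)) = 0)"
  proof (rule rcl_mn[OF f], intro allI impI)
    fix xs :: "nat list" assume "length xs = 1"
    then show "\<exists>y. 1 - (triangle (Suc ((y # xs) ! 0)) - (y # xs) ! 1) = 0"
      by (intro exI[of _ "xs ! 0"]) (simp add: triangle_def)
  qed
  then show ?thesis
    apply (rule rcl_cong)
    apply (simp add: tsum_def)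
    apply (rule arg_cong[where f = Least])
    apply (rule ext)
    apply arith
    done
qed

lemma rcl_tsum: "rcl n f \<Longrightarrow> rcl n (\<lambda>xs. tsum (f xs))"
  by (rule rcl_unop[OF rcl_tsum1])

lemma rcl_pd1: "rcl n f \<Longrightarrow> rcl n (\<lambda>xs. pd1 (f xs))"
  unfolding pd1_tsum by (intro rcl_sub rcl_tri rcl_tsum)

lemma rcl_pd2: "rcl n f \<Longrightarrow> rcl n (\<lambda>xs. pd2 (f xs))"
  unfolding pd2_tsum by (intro rcl_sub rcl_pd1 rcl_tsum)


lemma len2E': "length xs = Suc (Suc 0) \<Longrightarrow> (\<And>a b. xs = [a, b] \<Longrightarrow> P) \<Longrightarrow> P"
  by (cases xs; cases "tl xs") auto
lemma len3E': "length xs = Suc (Suc (Suc 0)) \<Longrightarrow> (\<And>a b c. xs = [a, b, c] \<Longrightarrow> P) \<Longrightarrow> P"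
  by (cases xs; cases "tl xs"; cases "tl (tl xs)") auto

definition rc1 :: "(nat \<Rightarrow> nat) \<Rightarrow> bool" where
  "rc1 f \<longleftrightarrow> (\<exists>r. \<forall>x. rec_eval r [x] (f x))"

lemma rc1_rcl: "rc1 f \<longleftrightarrow> rcl 1 (\<lambda>xs. f (xs ! 0))"
  unfolding rc1_def rcl_def
proof
  assume "\<exists>r. \<forall>x. rec_eval r [x] (f x)"
  then obtain r where "\<forall>x. rec_eval r [x] (f x)" by blast
  then show "\<exists>r. \<forall>xs. length xs = 1 \<longrightarrow> rec_eval r xs (f (xs ! 0))"
    by (intro exI[of _ r]) (auto elim!: len1E)
next
  assume "\<exists>r. \<forall>xs. length xs = 1 \<longrightarrow> rec_eval r xs (f (xs ! 0))"
  then obtain r where "\<forall>xs. length xs = 1 \<longrightarrow> rec_eval r xs (f (xs ! 0))" by blast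
  then show "\<exists>r. \<forall>x. rec_eval r [x] (f x)"
    by (intro exI[of _ r] allI) (drule spec[of _ "[_]"], simp)
qed

lemma rc1_rcl_app: "rc1 f \<Longrightarrow> rcl n g \<Longrightarrow> rcl n (\<lambda>xs. f (g xs))"
  unfolding rc1_rcl by (rule rcl_unop)

lemma rcl_rc1: "rcl 1 F \<Longrightarrow> (\<And>x. F [x] = f x) \<Longrightarrow> rc1 f"
  unfolding rc1_rcl by (erule rcl_cong) (auto elim!: len1E)

lemma rc1_cong: "rc1 f \<Longrightarrow> (\<And>x. f x = g x) \<Longrightarrow> rc1 g"
proof -
  assume "rc1 f" "\<And>x. f x = g x"
  then have "f = g" by auto
  then show "rc1 g" using \<open>rc1 f\<close> by simp
qed

lemma rc1_id: "rc1 (\<lambda>x. x)"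
  unfolding rc1_rcl by (rule rcl_proj) simp

lemma rc1_const: "rc1 (\<lambda>x. k)"
  unfolding rc1_rcl by (rule rcl_const)

lemma rc1_comp: "rc1 f \<Longrightarrow> rc1 g \<Longrightarrow> rc1 (\<lambda>x. f (g x))"
  unfolding rc1_rcl by (rule rcl_unop)

lemma rc1_add: "rc1 f \<Longrightarrow> rc1 g \<Longrightarrow> rc1 (\<lambda>x. f x + g x)"
  unfolding rc1_rcl by (rule rcl_add)
lemma rc1_sub: "rc1 f \<Longrightarrow> rc1 g \<Longrightarrow> rc1 (\<lambda>x. f x - g x)"
  unfolding rc1_rcl by (rule rcl_sub)
lemma rc1_mult: "rc1 f \<Longrightarrow> rc1 g \<Longrightarrow> rc1 (\<lambda>x. f x * g x)"
  unfolding rc1_rcl by (rule rcl_mult)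
lemma rc1_Suc: "rc1 f \<Longrightarrow> rc1 (\<lambda>x. Suc (f x))"
  unfolding rc1_rcl by (rule rcl_Suc)
lemma rc1_pe: "rc1 f \<Longrightarrow> rc1 g \<Longrightarrow> rc1 (\<lambda>x. prod_encode (f x, g x))"
  unfolding rc1_rcl by (rule rcl_pe)
lemma rc1_pd1: "rc1 f \<Longrightarrow> rc1 (\<lambda>x. pd1 (f x))"
  unfolding rc1_rcl by (rule rcl_pd1)
lemma rc1_pd2: "rc1 f \<Longrightarrow> rc1 (\<lambda>x. pd2 (f x))"
  unfolding rc1_rcl by (rule rcl_pd2)

definition rcp :: "(nat \<Rightarrow> bool) \<Rightarrow> bool" where
  "rcp P \<longleftrightarrow> rc1 (\<lambda>x. if P x then 1 else 0)"

lemma rcp_const: "rcp (\<lambda>x. b)"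
  unfolding rcp_def by (cases b) (simp_all add: rc1_const)

lemma rcp_eq: "rc1 f \<Longrightarrow> rc1 g \<Longrightarrow> rcp (\<lambda>x. f x = g x)"
  unfolding rcp_def
  by (rule rc1_cong[of "\<lambda>x. 1 - ((f x - g x) + (g x - f x))"])
     ((intro rc1_sub rc1_add rc1_const; assumption), auto)

lemma rcp_less: "rc1 f \<Longrightarrow> rc1 g \<Longrightarrow> rcp (\<lambda>x. f x < g x)"
  unfolding rcp_def
  by (rule rc1_cong[of "\<lambda>x. 1 - (1 - (g x - f x))"])
     ((intro rc1_sub rc1_add rc1_const; assumption), auto)

lemma rcp_not: "rcp P \<Longrightarrow> rcp (\<lambda>x. \<not> P x)"
  unfolding rcp_def
  by (rule rc1_cong[of "\<lambda>x. 1 - (if P x then 1 else 0)"])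
     ((intro rc1_sub rc1_add rc1_const; assumption), auto)

lemma rcp_and: "rcp P \<Longrightarrow> rcp Q \<Longrightarrow> rcp (\<lambda>x. P x \<and> Q x)"
  unfolding rcp_def
  by (rule rc1_cong[of "\<lambda>x. (if P x then 1 else 0) * (if Q x then 1 else 0)"])
     ((intro rc1_mult; assumption), auto)

lemma rcp_or: "rcp P \<Longrightarrow> rcp Q \<Longrightarrow> rcp (\<lambda>x. P x \<or> Q x)"
  using rcp_not[OF rcp_and[OF rcp_not rcp_not]] by simp

lemma rcp_imp: "rcp P \<Longrightarrow> rcp Q \<Longrightarrow> rcp (\<lambda>x. P x \<longrightarrow> Q x)"
  using rcp_or[OF rcp_not] by simp

lemma rcp_le: "rc1 f \<Longrightarrow> rc1 g \<Longrightarrow> rcp (\<lambda>x. f x \<le> g x)"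
  using rcp_not[OF rcp_less, of g f] by (simp add: not_less)

lemma rcp_cong: "rcp P \<Longrightarrow> (\<And>x. P x = Q x) \<Longrightarrow> rcp Q"
  unfolding rcp_def by (erule rc1_cong) simp

lemma rc1_if: "rcp P \<Longrightarrow> rc1 f \<Longrightarrow> rc1 g \<Longrightarrow> rc1 (\<lambda>x. if P x then f x else g x)"
  unfolding rcp_def
  by (rule rc1_cong[of "\<lambda>x. (if P x then 1 else 0) * f x + (1 - (if P x then 1 else 0)) * g x"])
     ((intro rc1_mult rc1_add rc1_sub rc1_const; assumption), auto)

lemma rc1_mn:
  assumes "rc1 (\<lambda>z. f (pd1 z) (pd2 z))" "\<And>x. \<exists>y. f x y = 0"
  shows "rc1 (\<lambda>x. LEAST y. f x y = 0)"
proof -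
  have "rcl 2 (\<lambda>xs. (\<lambda>z. f (pd1 z) (pd2 z)) (prod_encode (xs ! 1, xs ! 0)))"
    by (rule rc1_rcl_app[OF assms(1)]) (intro rcl_pe rcl_proj; simp)
  then have "rcl (Suc 1) (\<lambda>xs. f (xs ! 1) (xs ! 0))" by (simp add: numeral_2_eq_2)
  from rcl_mn[OF this] have "rcl 1 (\<lambda>xs. LEAST y. f ((y # xs) ! 1) ((y # xs) ! 0) = 0)"
    using assms(2) by (auto elim!: len1E)
  then show ?thesis by (rule rcl_rc1) simp
qed

lemma rec_nat_funpow: "rec_nat s (\<lambda>k acc. h acc) n = (h ^^ n) s"
  by (induction n) auto

lemma rc1_iter:
  assumes "rc1 (\<lambda>z. h (pd1 z) (pd2 z))" "rc1 N" "rc1 S"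
  shows "rc1 (\<lambda>x. (h x ^^ N x) (S x))"
proof -
  have f: "rcl 2 (\<lambda>ys. ys ! 1)" by (rule rcl_proj) simp
  have g: "rcl (Suc (Suc 2)) (\<lambda>ys. (\<lambda>z. h (pd1 z) (pd2 z)) (prod_encode (ys ! 2, ys ! 1)))"
    by (rule rc1_rcl_app[OF assms(1)]) (intro rcl_pe rcl_proj; simp)
  have "rcl 3 (\<lambda>xs. (h (xs ! 1) ^^ (xs ! 0)) (xs ! 2))"
    by (rule rcl_pr2[OF f g]) (auto simp: numeral_3_eq_3 rec_nat_funpow elim!: len3E')
  from rcl_comp3[OF this, of 1 "\<lambda>xs. N (xs ! 0)" "\<lambda>xs. xs ! 0" "\<lambda>xs. S (xs ! 0)"]
  have "rcl 1 (\<lambda>xs. (h (xs ! 0) ^^ N (xs ! 0)) (S (xs ! 0)))"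
    using assms(2,3) unfolding rc1_rcl by (simp add: rcl_proj)
  then show ?thesis by (rule rcl_rc1) simp
qed

lemma rcp_bex:
  assumes "rcp (\<lambda>z. P (pd1 z) (pd2 z))" "rc1 B"
  shows "rcp (\<lambda>x. \<exists>i<B x. P x i)"
proof -
  let ?f = "\<lambda>x y. if B x \<le> y \<or> P x y then 0 else (1::nat)"
  have fz: "rc1 (\<lambda>z. ?f (pd1 z) (pd2 z))"
    by (intro rc1_if rcp_or rcp_le rc1_comp[OF assms(2)] rc1_pd1 rc1_pd2 rc1_id rc1_const assms(1))
  have m: "rc1 (\<lambda>x. LEAST y. ?f x y = 0)" by (rule rc1_mn[of ?f, OF fz]) (simp, blast)
  have eq: "(\<exists>i<B x. P x i) = ((LEAST y. ?f x y = 0) < B x)" for x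
  proof
    assume "\<exists>i<B x. P x i"
    then obtain i where "i < B x" "P x i" by blast
    then have "(LEAST y. ?f x y = 0) \<le> i" by (intro Least_le) simp
    then show "(LEAST y. ?f x y = 0) < B x" using \<open>i < B x\<close> by simp
  next
    assume a: "(LEAST y. ?f x y = 0) < B x"
    have "?f x (LEAST y. ?f x y = 0) = 0" by (rule LeastI[of _ "B x"]) simp
    then show "\<exists>i<B x. P x i" using a by (auto split: if_splits)
  qed
  show ?thesis
    by (rule rcp_cong[OF rcp_less[OF m assms(2)]]) (simp add: eq)
qed

lemma rcp_ball:
  assumes "rcp (\<lambda>z. P (pd1 z) (pd2 z))" "rc1 B"
  shows "rcp (\<lambda>x. \<forall>i<B x. P x i)"
proof -
  have "rcp (\<lambda>x. \<not> (\<exists>i<B x. \<not> P x i))"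
    by (intro rcp_not rcp_bex assms)
  then show ?thesis by (rule rcp_cong) auto
qed


definition hd' :: "nat \<Rightarrow> nat" where "hd' L = pd1 (L - 1)"
definition tl' :: "nat \<Rightarrow> nat" where "tl' L = pd2 (L - 1)"
definition nth' :: "nat \<Rightarrow> nat \<Rightarrow> nat" where "nth' L k = hd' ((tl' ^^ k) L)"
definition len' :: "nat \<Rightarrow> nat" where "len' L = (LEAST k. (tl' ^^ k) L = 0)"

lemma hd'_cons[simp]: "hd' (list_encode (a # xs)) = a" by (simp add: hd'_def)
lemma tl'_cons[simp]: "tl' (list_encode (a # xs)) = list_encode xs" by (simp add: tl'_def)
lemma hd'_cons'[simp]: "hd' (Suc (prod_encode (a, b))) = a" by (simp add: hd'_def)
lemma tl'_cons'[simp]: "tl' (Suc (prod_encode (a, b))) = b" by (simp add: tl'_def)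
lemma tl'_0[simp]: "tl' 0 = 0"
  using pd2_pe[of 0 0] by (simp add: tl'_def prod_encode_def)

lemma tl'_drop: "(tl' ^^ k) (list_encode xs) = list_encode (drop k xs)"
proof (induction k arbitrary: xs)
  case 0 then show ?case by simp
next
  case (Suc k)
  show ?case
  proof (cases xs)
    case Nil then show ?thesis using Suc.IH[of "[]"] by (simp add: funpow_Suc_right del: funpow.simps)
  next
    case (Cons a ys) then show ?thesis using Suc.IH[of ys] by (simp add: funpow_Suc_right del: funpow.simps)
  qed
qed

lemma nth'_nth: "k < length xs \<Longrightarrow> nth' (list_encode xs) k = xs ! k"
  by (simp add: nth'_def tl'_drop Cons_nth_drop_Suc[symmetric])

lemma length_le_list_encode: "length xs \<le> list_encode xs"
proof (induction xs)
  case Nil then show ?case by simp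
next
  case (Cons a xs) then show ?case using le_prod_encode_2[of "list_encode xs" a] by simp
qed

lemma list_encode_0_iff: "list_encode xs = 0 \<longleftrightarrow> xs = []"
  by (cases xs) auto

lemma len'_length[simp]: "len' (list_encode xs) = length xs"
  unfolding len'_def tl'_drop list_encode_0_iff
  by (rule Least_equality) auto

lemma rc1_hd: "rc1 f \<Longrightarrow> rc1 (\<lambda>x. hd' (f x))"
  unfolding hd'_def by (intro rc1_pd1 rc1_sub rc1_const)
lemma rc1_tl: "rc1 f \<Longrightarrow> rc1 (\<lambda>x. tl' (f x))"
  unfolding tl'_def by (intro rc1_pd2 rc1_sub rc1_const)

lemma rc1_tlpow: "rc1 f \<Longrightarrow> rc1 g \<Longrightarrow> rc1 (\<lambda>x. (tl' ^^ g x) (f x))"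
  using rc1_iter[of "\<lambda>x s. tl' s" g f] by (simp add: rc1_tl rc1_pd2 rc1_id)

lemma rc1_nth: "rc1 f \<Longrightarrow> rc1 g \<Longrightarrow> rc1 (\<lambda>x. nth' (f x) (g x))"
  unfolding nth'_def by (intro rc1_hd rc1_tlpow)

lemma rc1_len: "rc1 f \<Longrightarrow> rc1 (\<lambda>x. len' (f x))"
proof -
  assume f: "rc1 f"
  have "rc1 (\<lambda>x. LEAST y. (tl' ^^ y) x = 0)"
  proof (rule rc1_mn)
    show "rc1 (\<lambda>z. (tl' ^^ pd2 z) (pd1 z))" by (intro rc1_tlpow rc1_pd1 rc1_pd2 rc1_id)
    fix x :: nat
    have "(tl' ^^ x) x = 0"
      using tl'_drop[of x "list_decode x"] length_le_list_encode[of "list_decode x"] by simp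
    then show "\<exists>y. (tl' ^^ y) x = 0" by blast
  qed
  then have "rc1 len'" unfolding len'_def by simp
  then show ?thesis using f by (rule rc1_comp)
qed

lemma foldl_iter:
  fixes h :: "nat \<Rightarrow> nat"
  assumes "\<And>s. h s = (if pd1 s = 0 then s else prod_encode (tl' (pd1 s), g (pd2 s) (hd' (pd1 s))))"
  shows "(h ^^ n) (prod_encode (list_encode xs, a)) =
         prod_encode (list_encode (drop n xs), foldl g a (take n xs))"
proof (induction n arbitrary: xs a)
  case 0 then show ?case by simp
next
  case (Suc n)
  show ?case
  proof (cases xs)
    case Nil
    have "h (prod_encode (list_encode xs, a)) = prod_encode (list_encode xs, a)"
      using assms Nil by simp
    then show ?thesis using Suc[of xs a] Nil by (simp add: funpow_Suc_right del: funpow.simps)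
  next
    case (Cons b ys)
    have "h (prod_encode (list_encode xs, a)) = prod_encode (list_encode ys, g a b)"
      using assms Cons by simp
    then show ?thesis using Suc[of ys "g a b"] Cons by (simp add: funpow_Suc_right del: funpow.simps)
  qed
qed

lemma rc1_foldl:
  assumes g: "rc1 (\<lambda>z. g (pd1 z) (pd1 (pd2 z)) (pd2 (pd2 z)))" and P: "rc1 P"
    and L: "rc1 L" and A: "rc1 A"
  shows "rc1 (\<lambda>x. foldl (g (P x)) (A x) (list_decode (L x)))"
proof -
  define h where "h x s = (if pd1 s = 0 then s
      else prod_encode (tl' (pd1 s), g (P x) (pd2 s) (hd' (pd1 s))))" for x s
  have g2: "rc1 (\<lambda>z. g (P (pd1 z)) (pd2 (pd2 z)) (hd' (pd1 (pd2 z))))"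
    using rc1_comp[OF g, of "\<lambda>z. prod_encode (P (pd1 z), prod_encode (pd2 (pd2 z), hd' (pd1 (pd2 z))))"]
    by (simp add: rc1_pe rc1_comp[OF P] rc1_pd1 rc1_pd2 rc1_hd rc1_id)
  have "rc1 (\<lambda>z. h (pd1 z) (pd2 z))"
    unfolding h_def
    by (intro rc1_if rcp_eq rc1_pe rc1_tl rc1_pd1 rc1_pd2 rc1_id rc1_const g2)
  from rc1_iter[OF this L rc1_pe[OF L A]]
  have "rc1 (\<lambda>x. pd2 ((h x ^^ L x) (prod_encode (L x, A x))))" by (rule rc1_pd2)
  moreover have "pd2 ((h x ^^ L x) (prod_encode (L x, A x))) = foldl (g (P x)) (A x) (list_decode (L x))" for x
  proof -
    have "(h x ^^ L x) (prod_encode (list_encode (list_decode (L x)), A x)) =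
       prod_encode (list_encode (drop (L x) (list_decode (L x))), foldl (g (P x)) (A x) (take (L x) (list_decode (L x))))"
      by (rule foldl_iter) (simp add: h_def)
    moreover have "length (list_decode (L x)) \<le> L x"
      using length_le_list_encode[of "list_decode (L x)"] by simp
    ultimately show ?thesis by simp
  qed
  ultimately show ?thesis by simp
qed

lemma foldl_cons_enc: "foldl (\<lambda>acc a. Suc (prod_encode (f a, acc))) (list_encode ys) xs =
    list_encode (rev (map f xs) @ ys)"
  by (induction xs arbitrary: ys) (simp_all add: list_encode.simps(2)[symmetric] del: list_encode.simps)

lemma rc1_map:
  assumes f: "rc1 (\<lambda>z. f (pd1 z) (pd2 z))" and P: "rc1 P" and L: "rc1 L"
  shows "rc1 (\<lambda>x. list_encode (map (f (P x)) (list_decode (L x))))"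
proof -
  have g: "rc1 (\<lambda>z. (\<lambda>p acc a. Suc (prod_encode (f p a, acc))) (pd1 z) (pd1 (pd2 z)) (pd2 (pd2 z)))"
    using rc1_comp[OF f, of "\<lambda>z. prod_encode (pd1 z, pd2 (pd2 z))"]
    by (simp add: rc1_Suc rc1_pe rc1_pd1 rc1_pd2 rc1_id)
  have r1: "rc1 (\<lambda>x. foldl (\<lambda>acc a. Suc (prod_encode (f (P x) a, acc))) 0 (list_decode (L x)))"
    using rc1_foldl[OF g P L rc1_const] by simp
  have g': "rc1 (\<lambda>z. (\<lambda>p acc a. Suc (prod_encode (a, acc))) (pd1 z) (pd1 (pd2 z)) (pd2 (pd2 z)))"
    by (simp add: rc1_Suc rc1_pe rc1_pd1 rc1_pd2 rc1_id)
  have "rc1 (\<lambda>x. foldl (\<lambda>acc a. Suc (prod_encode (a, acc))) 0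
      (list_decode (foldl (\<lambda>acc a. Suc (prod_encode (f (P x) a, acc))) 0 (list_decode (L x)))))"
    using rc1_foldl[OF g' rc1_const r1 rc1_const] by simp
  moreover have "foldl (\<lambda>acc a. Suc (prod_encode (a, acc))) 0
      (list_decode (foldl (\<lambda>acc a. Suc (prod_encode (f (P x) a, acc))) 0 (list_decode (L x))))
      = list_encode (map (f (P x)) (list_decode (L x)))" for x
    using foldl_cons_enc[of "f (P x)" "[]"] foldl_cons_enc[of "\<lambda>a. a" "[]"] by simp
  ultimately show ?thesis by simp
qed


lemma triangle_ge: "k \<le> triangle k"
  by (induction k) auto

lemma pd2_less: "pd1 n \<noteq> 0 \<Longrightarrow> pd2 n < n"
proof -
  assume a: "pd1 n \<noteq> 0"
  have "triangle (pd1 n + pd2 n) + pd1 n = n"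
    using pe_pd[of n] unfolding prod_encode_def by simp
  then show ?thesis using triangle_ge[of "pd1 n + pd2 n"] a by linarith
qed

lemma mem_list_encode_less: "x \<in> set xs \<Longrightarrow> x < list_encode xs"
proof (induction xs)
  case Nil then show ?case by simp
next
  case (Cons a xs) then show ?case
    using le_prod_encode_1[of a "list_encode xs"] le_prod_encode_2[of "list_encode xs" a] by auto
qed

lemma mem_list_decode_less: "x \<in> set (list_decode b) \<Longrightarrow> x < b"
  using mem_list_encode_less[of x "list_decode b"] by simp

lemma child_less: "pd1 n \<noteq> 0 \<Longrightarrow> x \<in> set (list_decode (pd2 n)) \<Longrightarrow> x < n"
  using pd2_less mem_list_decode_less less_trans by blast

function form_dec :: "nat \<Rightarrow> form" where
  "form_dec n = (if pd1 n = 0 then Var (pd2 n) else App (pd1 n - 1) (map form_dec (list_decode (pd2 n))))"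
  by auto
termination
  by (relation "measure id") (auto intro: child_less)

declare form_dec.simps[simp del]

lemma form_enc_pe: "form_enc (Var n) = prod_encode (0, n)"
  "form_enc (App c args) = prod_encode (Suc c, list_encode (map form_enc args))"
  by simp_all

lemma form_dec_enc[simp]: "form_dec (form_enc F) = F"
proof (induction F)
  case (Var n) then show ?case by (simp add: form_dec.simps)
next
  case (App c args)
  then show ?case by (subst form_dec.simps) (simp add: map_idI)
qed

lemma form_enc_dec[simp]: "form_enc (form_dec n) = n"
proof (induction n rule: form_dec.induct)
  case (1 n)
  show ?case
  proof (cases "pd1 n = 0")
    case True
    then show ?thesis using pe_pd[of n] by (subst form_dec.simps) simp
  next
    case False
    then have "map (\<lambda>x. form_enc (form_dec x)) (list_decode (pd2 n)) = list_decode (pd2 n)"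
      using 1 by (simp add: map_idI)
    then show ?thesis using False pe_pd[of n] by (subst form_dec.simps) (simp add: comp_def)
  qed
qed

lemma form_dec_unfold: "form_dec n = (if pd1 n = 0 then Var (pd2 n) else App (pd1 n - 1) (map form_dec (list_decode (pd2 n))))"
  by (rule form_dec.simps)

fun frec :: "(nat \<Rightarrow> nat) \<Rightarrow> (nat \<Rightarrow> nat \<Rightarrow> nat) \<Rightarrow> form \<Rightarrow> nat" where
  "frec lf nd (Var n) = lf n"
| "frec lf nd (App c args) = nd c (list_encode (map (frec lf nd) args))"

lemma frec_dec: "frec lf nd (form_dec m) = (if pd1 m = 0 then lf (pd2 m)
   else nd (pd1 m - 1) (list_encode (map (\<lambda>a. frec lf nd (form_dec a)) (list_decode (pd2 m)))))"
  by (subst form_dec_unfold) (simp add: comp_def)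

lemma rc1_comp': "rc1 f \<Longrightarrow> rc1 g \<Longrightarrow> (\<And>x. f (g x) = h x) \<Longrightarrow> rc1 h"
  using rc1_comp[of f g] by (metis ext)

lemma rc1_frec:
  assumes lf: "rc1 (\<lambda>z. lf (pd1 z) (pd2 z))"
    and nd: "rc1 (\<lambda>z. nd (pd1 z) (pd1 (pd2 z)) (pd2 (pd2 z)))"
    and P: "rc1 P" and X: "rc1 X"
  shows "rc1 (\<lambda>x. frec (lf (P x)) (nd (P x)) (form_dec (X x)))"
proof -
  define Rc where "Rc p a = frec (lf p) (nd p) (form_dec a)" for p a
  define node where "node p m T = (if pd1 m = 0 then lf p (pd2 m)
     else nd p (pd1 m - 1) (list_encode (map (\<lambda>a. nth' T (m - 1 - a)) (list_decode (pd2 m)))))" for p m T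
  define h where "h x s = prod_encode (Suc (pd1 s), Suc (prod_encode (node (P x) (pd1 s) (pd2 s), pd2 s)))" for x s
  have node_ok: "node p m (list_encode (rev (map (Rc p) [0..<m]))) = Rc p m" for p m
  proof (cases "pd1 m = 0")
    case True then show ?thesis by (simp add: node_def Rc_def frec_dec)
  next
    case False
    have map_eq: "map (\<lambda>a. nth' (list_encode (rev (map (Rc p) [0..<m]))) (m - 1 - a)) (list_decode (pd2 m))
        = map (Rc p) (list_decode (pd2 m))"
    proof (rule map_cong[OF refl])
      fix a assume "a \<in> set (list_decode (pd2 m))"
      then have am: "a < m" using child_less False by blast
      then show "nth' (list_encode (rev (map (Rc p) [0..<m]))) (m - 1 - a) = Rc p a"
        by (simp add: nth'_nth rev_nth)
    qed
    have r: "Rc p m = nd p (pd1 m - 1) (list_encode (map (Rc p) (list_decode (pd2 m))))"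
      unfolding Rc_def using frec_dec[of "lf p" "nd p" m] False by simp
    show ?thesis unfolding node_def map_eq r using False by simp
  qed
  have iter: "(h x ^^ n) (prod_encode (0, 0)) = prod_encode (n, list_encode (rev (map (Rc (P x)) [0..<n])))" for x n
    by (induction n) (simp_all add: h_def node_ok)
  have g1: "rc1 (\<lambda>z. lf (P (pd1 z)) (pd2 (pd1 (pd2 z))))"
    using rc1_comp[OF lf, of "\<lambda>z. prod_encode (P (pd1 z), pd2 (pd1 (pd2 z)))"]
    by (simp add: rc1_pe rc1_comp[OF P] rc1_pd1 rc1_pd2 rc1_id)
  have fm: "rc1 (\<lambda>z. nth' (pd2 (pd1 z)) (pd1 (pd1 z) - 1 - pd2 z))"
    by (intro rc1_nth rc1_sub rc1_pd1 rc1_pd2 rc1_id rc1_const)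
  have g2: "rc1 (\<lambda>z. list_encode (map (\<lambda>a. nth' (pd2 (pd2 z)) (pd1 (pd2 z) - 1 - a)) (list_decode (pd2 (pd1 (pd2 z))))))"
    using rc1_map[of "\<lambda>q a. nth' (pd2 q) (pd1 q - 1 - a)" "\<lambda>z. pd2 z" "\<lambda>z. pd2 (pd1 (pd2 z))"] fm
    by (simp add: rc1_pd1 rc1_pd2 rc1_id)
  have g3: "rc1 (\<lambda>z. nd (P (pd1 z)) (pd1 (pd1 (pd2 z)) - 1)
       (list_encode (map (\<lambda>a. nth' (pd2 (pd2 z)) (pd1 (pd2 z) - 1 - a)) (list_decode (pd2 (pd1 (pd2 z)))))))"
    by (rule rc1_comp'[OF nd, of "\<lambda>z. prod_encode (P (pd1 z), prod_encode (pd1 (pd1 (pd2 z)) - 1,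
       list_encode (map (\<lambda>a. nth' (pd2 (pd2 z)) (pd1 (pd2 z) - 1 - a)) (list_decode (pd2 (pd1 (pd2 z)))))))"])
       (intro rc1_pe rc1_comp[OF P] rc1_pd1 rc1_pd2 rc1_id rc1_sub rc1_const g2, simp)
  have hz: "rc1 (\<lambda>z. h (pd1 z) (pd2 z))"
    unfolding h_def node_def
    by (intro rc1_pe rc1_Suc rc1_pd1 rc1_pd2 rc1_id rc1_if rcp_eq rc1_const g1 g3)
  have "rc1 (\<lambda>x. hd' (pd2 ((h x ^^ Suc (X x)) (prod_encode (0, 0)))))"
    by (intro rc1_hd rc1_pd2 rc1_iter[OF hz] rc1_Suc X rc1_const)
  moreover have "hd' (pd2 ((h x ^^ Suc (X x)) (prod_encode (0, 0)))) = Rc (P x) (X x)" for x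
    by (simp only: iter) simp
  ultimately show ?thesis unfolding Rc_def by simp
qed


lemma len'_dec: "len' s = length (list_decode s)"
  using len'_length[of "list_decode s"] by simp

lemma nth'_dec: "n < length (list_decode s) \<Longrightarrow> nth' s n = list_decode s ! n"
  using nth'_nth[of n "list_decode s"] by simp

lemma pe00[simp]: "prod_encode (0, 0) = 0" by (simp add: prod_encode_def)
lemma rc1_pd1': "rc1 pd1" using rc1_pd1[OF rc1_id] by simp
lemma rc1_pd2': "rc1 pd2" using rc1_pd2[OF rc1_id] by simp

definition wfnd :: "nat list \<Rightarrow> nat \<Rightarrow> nat \<Rightarrow> nat" where
  "wfnd ar c v = (if c < length ar \<and> len' v = nth' (list_encode ar) c \<and> (\<forall>i<len' v. nth' v i = Suc 0) then Suc 0 else 0)"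

definition WFc :: "nat list \<Rightarrow> nat \<Rightarrow> nat" where
  "WFc ar x = frec (\<lambda>n. Suc 0) (wfnd ar) (form_dec x)"

lemma wfnd_enc: "wfnd ar c (list_encode L) =
   (if c < length ar \<and> length L = ar ! c \<and> (\<forall>i<length L. L ! i = Suc 0) then Suc 0 else 0)"
  by (cases "c < length ar") (simp_all add: wfnd_def nth'_nth)

lemma frec_wf: "frec (\<lambda>n. Suc 0) (wfnd ar) F = (if wf_form ar F then Suc 0 else 0)"
proof (induction F)
  case (Var n) then show ?case by simp
next
  case (App c args)
  have m: "map (frec (\<lambda>n. Suc 0) (wfnd ar)) args = map (\<lambda>a. if wf_form ar a then Suc 0 else 0) args"
    using App by simp
  have e: "(\<forall>i<length (map (frec (\<lambda>n. Suc 0) (wfnd ar)) args). map (frec (\<lambda>n. Suc 0) (wfnd ar)) args ! i = Suc 0) \<longleftrightarrow> (\<forall>a\<in>set args. wf_form ar a)"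
    unfolding m by (auto simp: all_set_conv_all_nth)
  show ?case
    by (simp only: frec.simps wfnd_enc e) simp
qed

lemma WFc_iff: "WFc ar x = Suc 0 \<longleftrightarrow> wf_form ar (form_dec x)"
  unfolding WFc_def frec_wf by simp

lemma rc1_WFc: "rc1 (WFc ar)"
proof -
  have nd: "rc1 (\<lambda>z. wfnd ar (pd1 (pd2 z)) (pd2 (pd2 z)))"
    unfolding wfnd_def
    by (intro rc1_if rcp_and rcp_less rcp_eq rcp_ball rc1_len rc1_nth rc1_pd1 rc1_pd2 rc1_id rc1_const)
  have "rc1 (\<lambda>x. frec ((\<lambda>p n. Suc 0) ((\<lambda>x. 0) x)) ((\<lambda>p. wfnd ar) ((\<lambda>x. 0) x)) (form_dec ((\<lambda>x. x) x)))"
    by (rule rc1_frec) (simp_all add: rc1_const rc1_id nd rc1_pd1' rc1_pd2')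
  then show ?thesis unfolding WFc_def[abs_def] by simp
qed

definition sig :: "nat \<Rightarrow> nat \<Rightarrow> form" where
  "sig s n = (if n < length (list_decode s) then form_dec (list_decode s ! n) else Var 0)"

lemma rc1_list_fixed: "(\<And>a. a \<in> set args \<Longrightarrow> rc1 (F a)) \<Longrightarrow> rc1 (\<lambda>s. list_encode (map (\<lambda>a. F a s) args))"
proof (induction args)
  case Nil then show ?case by (simp add: rc1_const)
next
  case (Cons a args)
  then show ?case by (simp add: rc1_Suc rc1_pe)
qed

lemma form_enc_Var0: "form_enc (Var 0) = 0"
  by (simp add: prod_encode_def)

lemma rc1_SE: "rc1 (\<lambda>s. form_enc (subst (sig s) A))"
proof (induction A)
  case (Var n)
  have "rc1 (\<lambda>s. if n < len' s then nth' s n else 0)"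
    by (intro rc1_if rcp_less rc1_len rc1_nth rc1_id rc1_const)
  then show ?case
    by (rule rc1_cong) (simp add: sig_def len'_dec nth'_dec form_enc_Var0)
next
  case (App c args)
  have "rc1 (\<lambda>s. prod_encode (Suc c, list_encode (map (\<lambda>a. form_enc (subst (sig s) a)) args)))"
    by (intro rc1_pe rc1_const rc1_list_fixed App)
  then show ?case by (simp add: comp_def)
qed

lemma rc1_partial3:
  assumes "\<forall>a b c. D a b c \<longrightarrow> rec_eval r [a, b, c] (F a b c)" "rc1 f" "rc1 g" "rc1 h"
    "\<And>x. D (f x) (g x) (h x)"
  shows "rc1 (\<lambda>x. F (f x) (g x) (h x))"
proof -
  obtain rf where rf: "\<forall>x. rec_eval rf [x] (f x)" using assms(2) unfolding rc1_def by blast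
  obtain rg where rg: "\<forall>x. rec_eval rg [x] (g x)" using assms(3) unfolding rc1_def by blast
  obtain rh where rh: "\<forall>x. rec_eval rh [x] (h x)" using assms(4) unfolding rc1_def by blast
  show ?thesis unfolding rc1_def
  proof (intro exI allI)
    fix x
    show "rec_eval (Cn r [rf, rg, rh]) [x] (F (f x) (g x) (h x))"
      by (rule rec_eval.comp[where ys = "[f x, g x, h x]"])
         (use assms(1,5) rf rg rh in \<open>auto simp: less_Suc_eq numeral_3_eq_3\<close>)
  qed
qed

lemma rc1_partial2:
  assumes "\<forall>a b. D a b \<longrightarrow> rec_eval r [a, b] (F a b)" "rc1 f" "rc1 g"
    "\<And>x. D (f x) (g x)"
  shows "rc1 (\<lambda>x. F (f x) (g x))"
proof -
  obtain rf where rf: "\<forall>x. rec_eval rf [x] (f x)" using assms(2) unfolding rc1_def by blast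
  obtain rg where rg: "\<forall>x. rec_eval rg [x] (g x)" using assms(3) unfolding rc1_def by blast
  show ?thesis unfolding rc1_def
  proof (intro exI allI)
    fix x
    show "rec_eval (Cn r [rf, rg]) [x] (F (f x) (g x))"
      by (rule rec_eval.comp[where ys = "[f x, g x]"])
         (use assms(1,4) rf rg in \<open>auto simp: less_Suc_eq\<close>)
  qed
qed


fun vars :: "form \<Rightarrow> nat set" where
  "vars (Var n) = {n}"
| "vars (App c args) = \<Union> (vars ` set args)"

lemma finite_vars: "finite (vars F)"
  by (induction F) auto

lemma subst_cong: "(\<forall>n\<in>vars A. \<sigma> n = \<tau> n) \<Longrightarrow> subst \<sigma> A = subst \<tau> A"
  by (induction A) auto

lemma eval_cong: "(\<forall>n\<in>vars F. v n = w n) \<Longrightarrow> eval N v F = eval N w F"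
  by (induction F) (auto intro!: arg_cong[where f = "tf N _"])

lemma eval_lt: "is_logic ar N \<Longrightarrow> (\<forall>n. v n < nv N) \<Longrightarrow> wf_form ar F \<Longrightarrow> eval N v F < nv N"
proof (induction F)
  case (Var n) then show ?case by simp
next
  case (App c args)
  then have "set (map (eval N v) args) \<subseteq> {..<nv N}" by auto
  then show ?case using App.prems unfolding is_logic_def by auto
qed

definition valf :: "(nat \<Rightarrow> matrix) \<Rightarrow> nat \<Rightarrow> nat \<Rightarrow> nat \<Rightarrow> nat" where
  "valf M j V n = (if n < len' V \<and> nth' V n < nv (M j) then nth' V n else 0)"

definition validtf :: "nat list \<Rightarrow> (nat \<Rightarrow> matrix) \<Rightarrow> nat \<Rightarrow> nat \<Rightarrow> nat \<Rightarrow> bool" where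
  "validtf ar M j c v \<longleftrightarrow> c < length ar \<and> len' v = nth' (list_encode ar) c \<and> (\<forall>i<len' v. nth' v i < nv (M j))"

definition TFS :: "nat list \<Rightarrow> (nat \<Rightarrow> matrix) \<Rightarrow> nat \<Rightarrow> nat \<Rightarrow> nat \<Rightarrow> nat" where
  "TFS ar M j c v = (if validtf ar M j c v then tf (M j) c (list_decode v) else 0)"

definition EVc :: "nat list \<Rightarrow> (nat \<Rightarrow> matrix) \<Rightarrow> nat \<Rightarrow> nat \<Rightarrow> nat" where
  "EVc ar M x p = frec (valf M (pd1 p) (pd2 p)) (TFS ar M (pd1 p)) (form_dec x)"

definition DSc :: "(nat \<Rightarrow> matrix) \<Rightarrow> nat \<Rightarrow> nat \<Rightarrow> nat" where
  "DSc M j y = (if y < nv (M j) \<and> y \<in> des (M j) then Suc 0 else 0)"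

lemma all_nth_lt: "(\<forall>i<length xs. xs ! i < k) \<longleftrightarrow> set xs \<subseteq> {..<k}"
  by (metis in_set_conv_nth lessThan_iff subset_iff)

lemma validtf_iff: "validtf ar M j c v \<longleftrightarrow>
   c < length ar \<and> length (list_decode v) = ar ! c \<and> set (list_decode v) \<subseteq> {..<nv (M j)}"
  unfolding validtf_def len'_dec
  by (cases "c < length ar") (auto simp: nth'_nth nth'_dec all_nth_lt[symmetric])

lemma rc1_TFS:
  assumes NV: "rc1 (\<lambda>j. nv (M j))" and pos: "\<forall>j. 0 < nv (M j)"
    and R3: "\<forall>i c xs. c < length ar \<and> length xs = ar ! c \<and> set xs \<subseteq> {..<nv (M i)} \<longrightarrow>
          rec_eval r3 [i, c, list_encode xs] (tf (M i) c xs)"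
  shows "rc1 (\<lambda>z. TFS ar M (pd1 z) (pd1 (pd2 z)) (pd2 (pd2 z)))"
proof (cases "ar = []")
  case True
  then show ?thesis by (rule_tac rc1_cong[OF rc1_const[of 0]]) (simp add: TFS_def validtf_def)
next
  case False
  let ?V = "\<lambda>z. validtf ar M (pd1 z) (pd1 (pd2 z)) (pd2 (pd2 z))"
  have vp: "rcp ?V"
    unfolding validtf_def
    by (intro rcp_and rcp_less rcp_eq rcp_ball rc1_len rc1_nth rc1_comp[OF NV] rc1_pd1 rc1_pd2 rc1_id rc1_const)
  define c' where "c' z = (if ?V z then pd1 (pd2 z) else 0)" for z
  define v' where "v' z = (if ?V z then pd2 (pd2 z) else list_encode (replicate (ar ! 0) 0))" for z
  have R3': "\<forall>a b c. (b < length ar \<and> length (list_decode c) = ar ! b \<and> set (list_decode c) \<subseteq> {..<nv (M a)})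
      \<longrightarrow> rec_eval r3 [a, b, c] (tf (M a) b (list_decode c))"
    using R3 by (metis list_decode_inverse)
  have "rc1 (\<lambda>z. tf (M (pd1 z)) (c' z) (list_decode (v' z)))"
  proof (rule rc1_partial3[OF R3'])
    show "rc1 c'" unfolding c'_def by (intro rc1_if vp rc1_pd1 rc1_pd2 rc1_id rc1_const)
    show "rc1 v'" unfolding v'_def by (intro rc1_if vp rc1_pd1 rc1_pd2 rc1_id rc1_const)
    show "rc1 pd1" by (rule rc1_pd1')
    fix z
    show "c' z < length ar \<and> length (list_decode (v' z)) = ar ! c' z \<and>
        set (list_decode (v' z)) \<subseteq> {..<nv (M (pd1 z))}"
      using False pos by (cases "?V z") (auto simp: c'_def v'_def validtf_iff)
  qed
  then have "rc1 (\<lambda>z. if ?V z then tf (M (pd1 z)) (c' z) (list_decode (v' z)) else 0)"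
    by (intro rc1_if vp rc1_const)
  then show ?thesis by (rule rc1_cong) (simp add: TFS_def c'_def v'_def)
qed

lemma rc1_DSc:
  assumes NV: "rc1 (\<lambda>j. nv (M j))" and pos: "\<forall>j. 0 < nv (M j)"
    and R2: "\<forall>i x. x < nv (M i) \<longrightarrow> rec_eval r2 [i, x] (if x \<in> des (M i) then 1 else 0)"
  shows "rc1 (\<lambda>z. DSc M (pd1 z) (pd2 z))"
proof -
  define y' where "y' z = (if pd2 z < nv (M (pd1 z)) then pd2 z else 0)" for z
  have t: "rc1 (\<lambda>z. (\<lambda>a b. if b \<in> des (M a) then 1 else 0) (pd1 z) (y' z))"
  proof (rule rc1_partial2[of "\<lambda>a b. b < nv (M a)" r2 "\<lambda>a b. if b \<in> des (M a) then 1 else 0" pd1 y'])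
    show "\<forall>a b. b < nv (M a) \<longrightarrow> rec_eval r2 [a, b] (if b \<in> des (M a) then 1 else 0)" using R2 by blast
    show "rc1 pd1" by (rule rc1_pd1')
    show "rc1 y'" unfolding y'_def by (intro rc1_if rcp_less rc1_comp[OF NV] rc1_pd1 rc1_pd2 rc1_id rc1_const)
    fix z show "y' z < nv (M (pd1 z))" using pos by (simp add: y'_def)
  qed
  have "rc1 (\<lambda>z. if pd2 z < nv (M (pd1 z)) then (if y' z \<in> des (M (pd1 z)) then 1 else 0) else 0)"
    by (rule rc1_if[OF _ t[simplified] rc1_const]) (intro rcp_less rc1_comp[OF NV] rc1_pd1 rc1_pd2 rc1_id)
  then show ?thesis by (rule rc1_cong) (simp add: DSc_def y'_def)
qed

lemma rc1_EVc:
  assumes NV: "rc1 (\<lambda>j. nv (M j))" and pos: "\<forall>j. 0 < nv (M j)"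
    and R3: "\<forall>i c xs. c < length ar \<and> length xs = ar ! c \<and> set xs \<subseteq> {..<nv (M i)} \<longrightarrow>
          rec_eval r3 [i, c, list_encode xs] (tf (M i) c xs)"
  shows "rc1 (\<lambda>z. EVc ar M (pd1 z) (pd2 z))"
proof -
  have lf: "rc1 (\<lambda>z. valf M (pd1 (pd1 z)) (pd2 (pd1 z)) (pd2 z))"
    unfolding valf_def
    by (intro rc1_if rcp_and rcp_less rc1_len rc1_nth rc1_comp[OF NV] rc1_pd1 rc1_pd2 rc1_id rc1_const)
  have nd: "rc1 (\<lambda>z. TFS ar M (pd1 (pd1 z)) (pd1 (pd2 z)) (pd2 (pd2 z)))"
    by (rule rc1_comp'[OF rc1_TFS[OF NV pos R3], of "\<lambda>z. prod_encode (pd1 (pd1 z), pd2 z)"])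
       (intro rc1_pe rc1_pd1 rc1_pd2 rc1_id, simp)
  have "rc1 (\<lambda>x. frec ((\<lambda>p. valf M (pd1 p) (pd2 p)) (pd2 x)) ((\<lambda>p. TFS ar M (pd1 p)) (pd2 x)) (form_dec (pd1 x)))"
    by (rule rc1_frec) (simp_all add: lf nd rc1_pd1' rc1_pd2')
  then show ?thesis unfolding EVc_def by simp
qed

lemma valf_lt: "0 < nv (M j) \<Longrightarrow> valf M j V n < nv (M j)"
  by (simp add: valf_def)

lemma EV_correct:
  assumes L: "is_logic ar (M j)"
  shows "wf_form ar F \<Longrightarrow> frec (valf M j V) (TFS ar M j) F = eval (M j) (valf M j V) F"
proof (induction F)
  case (Var n) then show ?case by simp
next
  case (App c args)
  have pos: "0 < nv (M j)" using L unfolding is_logic_def by simp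
  have m: "map (frec (valf M j V) (TFS ar M j)) args = map (eval (M j) (valf M j V)) args"
    using App by auto
  have "set (map (eval (M j) (valf M j V)) args) \<subseteq> {..<nv (M j)}"
    using eval_lt[OF L, of "valf M j V"] valf_lt[of M j, OF pos] App.prems by auto
  then have "validtf ar M j c (list_encode (map (eval (M j) (valf M j V)) args))"
    using App.prems by (simp add: validtf_iff)
  then have "TFS ar M j c (list_encode (map (eval (M j) (valf M j V)) args)) = eval (M j) (valf M j V) (App c args)"
    by (simp add: TFS_def)
  moreover have "frec (valf M j V) (TFS ar M j) (App c args) = TFS ar M j c (list_encode (map (eval (M j) (valf M j V)) args))"
    by (simp only: frec.simps m)
  ultimately show ?case by simp
qed


definition SE :: "form \<Rightarrow> nat \<Rightarrow> nat" where
  "SE A s = form_enc (subst (sig s) A)"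

lemma rc1_SE': "rc1 g \<Longrightarrow> rc1 (\<lambda>x. SE A (g x))"
  unfolding SE_def by (rule rc1_comp[OF rc1_SE])

lemma rc1_WFc': "rc1 g \<Longrightarrow> rc1 (\<lambda>x. WFc ar (g x))"
  by (rule rc1_comp[OF rc1_WFc])

lemma rcp_list_ex: "(\<And>a. a \<in> set xs \<Longrightarrow> rcp (P a)) \<Longrightarrow> rcp (\<lambda>z. \<exists>a\<in>set xs. P a z)"
proof (induction xs)
  case Nil then show ?case by (simp add: rcp_const)
next
  case (Cons a xs)
  have "rcp (\<lambda>z. P a z \<or> (\<exists>a\<in>set xs. P a z))" by (rule rcp_or) (use Cons in auto)
  then show ?case by simp
qed

lemma rcp_list_all: "(\<And>a. a \<in> set xs \<Longrightarrow> rcp (P a)) \<Longrightarrow> rcp (\<lambda>z. \<forall>a\<in>set xs. P a z)"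
proof (induction xs)
  case Nil then show ?case by (simp add: rcp_const)
next
  case (Cons a xs)
  have "rcp (\<lambda>z. P a z \<and> (\<forall>a\<in>set xs. P a z))" by (rule rcp_and) (use Cons in auto)
  then show ?case by simp
qed

lemma rcp_comp': "rcp P \<Longrightarrow> rc1 g \<Longrightarrow> (\<And>x. P (g x) = Q x) \<Longrightarrow> rcp Q"
  unfolding rcp_def by (rule rc1_comp'[of "\<lambda>x. if P x then 1 else 0" g]) auto

definition okS :: "nat list \<Rightarrow> calc \<Rightarrow> nat \<Rightarrow> nat \<Rightarrow> bool" where
  "okS ar C W k \<longleftrightarrow>
    (\<forall>i<len' (pd2 (nth' W k)). WFc ar (nth' (pd2 (nth' W k)) i) = Suc 0) \<and>
    ((\<exists>A\<in>set (axioms C). pd1 (nth' W k) = SE A (pd2 (nth' W k))) \<or>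
     (\<exists>r\<in>set (rules C). pd1 (nth' W k) = SE (snd r) (pd2 (nth' W k)) \<and>
        (\<forall>p\<in>set (fst r). \<exists>i<k. pd1 (nth' W i) = SE p (pd2 (nth' W k)))))"

definition validW :: "nat list \<Rightarrow> calc \<Rightarrow> nat \<Rightarrow> bool" where
  "validW ar C W \<longleftrightarrow> (\<forall>k<len' W. okS ar C W k)"

definition memW :: "nat \<Rightarrow> nat \<Rightarrow> bool" where
  "memW x W \<longleftrightarrow> (\<exists>k<len' W. pd1 (nth' W k) = x)"

lemma rcp_okS: "rcp (\<lambda>z. okS ar C (pd1 z) (pd2 z))"
  unfolding okS_def
  by (intro rcp_and rcp_or rcp_ball rcp_bex rcp_list_ex rcp_list_all rcp_eq rc1_SE' rc1_WFc'
      rc1_len rc1_nth rc1_pd1 rc1_pd2 rc1_id rc1_const)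

lemma rcp_validW: "rc1 g \<Longrightarrow> rcp (\<lambda>x. validW ar C (g x))"
proof -
  assume g: "rc1 g"
  have "rcp (\<lambda>x. \<forall>k<len' (g x). okS ar C (g x) k)"
  proof (rule rcp_ball)
    show "rc1 (\<lambda>x. len' (g x))" by (rule rc1_len[OF g])
    show "rcp (\<lambda>z. okS ar C (g (pd1 z)) (pd2 z))"
      by (rule rcp_comp'[OF rcp_okS, of "\<lambda>z. prod_encode (g (pd1 z), pd2 z)"])
         (intro rc1_pe rc1_comp[OF g] rc1_pd1 rc1_pd2 rc1_id, simp)
  qed
  then show ?thesis unfolding validW_def .
qed

lemma rcp_memW: assumes f: "rc1 f" and g: "rc1 g" shows "rcp (\<lambda>x. memW (f x) (g x))"
  unfolding memW_def
  by (intro rcp_bex rcp_eq rc1_pd1 rc1_nth rc1_len rc1_comp[OF f] rc1_comp[OF g] rc1_pd2 rc1_id)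

lemma sig_wf:
  assumes "\<forall>i<length (list_decode s). wf_form ar (form_dec (list_decode s ! i))"
  shows "wf_subst ar (sig s)"
  using assms unfolding wf_subst_def sig_def by auto

lemma W_sound:
  assumes V: "validW ar C W" and Mm: "memW x W"
  shows "form_dec x \<in> Thm ar C"
proof -
  define Ls where "Ls = list_decode W"
  define ds where "ds = map (\<lambda>st. form_dec (pd1 st)) Ls"
  have lenW: "len' W = length Ls" by (simp add: Ls_def len'_dec)
  have nthW: "k < length Ls \<Longrightarrow> nth' W k = Ls ! k" for k by (simp add: Ls_def nth'_dec)
  have "derivation ar C ds"
    unfolding derivation_def
  proof (intro allI impI)
    fix i assume "i < length ds"
    then have i: "i < length Ls" by (simp add: ds_def)
    define s where "s = pd2 (Ls ! i)"
    have ok: "okS ar C W i" using V i lenW unfolding validW_def by simp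
    have ws: "wf_subst ar (sig s)"
    proof (rule sig_wf, intro allI impI)
      fix i' assume "i' < length (list_decode s)"
      then show "wf_form ar (form_dec (list_decode s ! i'))"
        using ok i unfolding okS_def by (auto simp: nthW s_def len'_dec nth'_dec WFc_iff)
    qed
    have dsi: "ds ! i = form_dec (pd1 (Ls ! i))" using i by (simp add: ds_def)
    from ok i have "(\<exists>A\<in>set (axioms C). pd1 (Ls ! i) = SE A s) \<or>
     (\<exists>r\<in>set (rules C). pd1 (Ls ! i) = SE (snd r) s \<and>
        (\<forall>p\<in>set (fst r). \<exists>i'<i. pd1 (nth' W i') = SE p s))"
      unfolding okS_def by (simp add: nthW s_def)
    then show "(\<exists>A\<in>set (axioms C). \<exists>\<sigma>. wf_subst ar \<sigma> \<and> ds ! i = subst \<sigma> A) \<or>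
          (\<exists>(ps, c)\<in>set (rules C). \<exists>\<sigma>. wf_subst ar \<sigma> \<and> ds ! i = subst \<sigma> c \<and>
              (\<forall>p\<in>set ps. subst \<sigma> p \<in> set (take i ds)))"
    proof
      assume "\<exists>A\<in>set (axioms C). pd1 (Ls ! i) = SE A s"
      then obtain A where A: "A \<in> set (axioms C)" "pd1 (Ls ! i) = SE A s" by blast
      have "ds ! i = subst (sig s) A" using dsi A by (simp add: SE_def)
      then show ?thesis using A(1) ws by blast
    next
      assume "\<exists>r\<in>set (rules C). pd1 (Ls ! i) = SE (snd r) s \<and>
        (\<forall>p\<in>set (fst r). \<exists>i'<i. pd1 (nth' W i') = SE p s)"
      then obtain ps c where r: "(ps, c) \<in> set (rules C)" "pd1 (Ls ! i) = SE c s"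
        "\<forall>p\<in>set ps. \<exists>i'<i. pd1 (nth' W i') = SE p s" by auto
      have "\<forall>p\<in>set ps. subst (sig s) p \<in> set (take i ds)"
      proof
        fix p assume "p \<in> set ps"
        then obtain i' where i'0: "i' < i" "pd1 (nth' W i') = SE p s" using r(3) by blast
        then have i': "i' < i" "pd1 (Ls ! i') = SE p s" using i nthW[of i'] by auto
        then have "take i ds ! i' = subst (sig s) p"
          using i by (simp add: ds_def SE_def)
        moreover have "i' < length (take i ds)" using i' i by (simp add: ds_def)
        ultimately show "subst (sig s) p \<in> set (take i ds)" by (metis nth_mem)
      qed
      moreover have "ds ! i = subst (sig s) c" using dsi r(2) by (simp add: SE_def)
      ultimately have "\<exists>\<sigma>. wf_subst ar \<sigma> \<and> ds ! i = subst \<sigma> c \<and> (\<forall>p\<in>set ps. subst \<sigma> p \<in> set (take i ds))"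
        using ws by blast
      then show ?thesis using r(1) by blast
    qed
  qed
  moreover have "form_dec x \<in> set ds"
  proof -
    obtain k where k: "k < length Ls" "pd1 (Ls ! k) = x" using Mm unfolding memW_def by (auto simp: lenW nthW)
    then have "ds ! k = form_dec x" by (simp add: ds_def)
    then show ?thesis using k by (metis ds_def length_map nth_mem)
  qed
  ultimately show ?thesis unfolding Thm_def by blast
qed


lemma list_decode_W: "len' (list_encode xs) = length xs" "k < length xs \<Longrightarrow> nth' (list_encode xs) k = xs ! k"
  by (simp_all add: nth'_nth)

lemma W_complete:
  assumes "F \<in> Thm ar C"
  shows "\<exists>W. validW ar C W \<and> memW (form_enc F) W"
proof -
  obtain ds where der: "derivation ar C ds" and F: "F \<in> set ds"
    using assms unfolding Thm_def by blast
  define FS where "FS = set (axioms C) \<union> snd ` set (rules C) \<union> (\<Union>r\<in>set (rules C). set (fst r))"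
  have "finite (\<Union> (vars ` FS))" unfolding FS_def by (auto simp: finite_vars)
  then obtain N where N: "\<forall>n\<in>\<Union> (vars ` FS). n < N" using finite_nat_set_iff_bounded by blast
  define Q where "Q i \<sigma> \<longleftrightarrow> (i < length ds \<longrightarrow> wf_subst ar \<sigma> \<and>
      ((\<exists>A\<in>set (axioms C). ds ! i = subst \<sigma> A) \<or>
       (\<exists>(ps, c)\<in>set (rules C). ds ! i = subst \<sigma> c \<and> (\<forall>p\<in>set ps. subst \<sigma> p \<in> set (take i ds)))))" for i \<sigma>
  have ex: "\<exists>\<sigma>. Q i \<sigma>" for i
  proof (cases "i < length ds")
    case False then show ?thesis unfolding Q_def by blast
  next
    case True
    from der True have "(\<exists>A\<in>set (axioms C). \<exists>\<sigma>. wf_subst ar \<sigma> \<and> ds ! i = subst \<sigma> A) \<or>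
      (\<exists>(ps, c)\<in>set (rules C). \<exists>\<sigma>. wf_subst ar \<sigma> \<and> ds ! i = subst \<sigma> c \<and>
       (\<forall>p\<in>set ps. subst \<sigma> p \<in> set (take i ds)))"
      unfolding derivation_def by blast
    then show ?thesis
    proof
      assume "\<exists>A\<in>set (axioms C). \<exists>\<sigma>. wf_subst ar \<sigma> \<and> ds ! i = subst \<sigma> A"
      then show ?thesis unfolding Q_def by blast
    next
      assume "\<exists>(ps, c)\<in>set (rules C). \<exists>\<sigma>. wf_subst ar \<sigma> \<and> ds ! i = subst \<sigma> c \<and>
       (\<forall>p\<in>set ps. subst \<sigma> p \<in> set (take i ds))"
      then obtain r \<sigma> where r: "r \<in> set (rules C)" "wf_subst ar \<sigma>" "ds ! i = subst \<sigma> (snd r)"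
        "\<forall>p\<in>set (fst r). subst \<sigma> p \<in> set (take i ds)" by (auto simp: case_prod_beta)
      have "\<exists>(ps', c')\<in>set (rules C). ds ! i = subst \<sigma> c' \<and> (\<forall>p\<in>set ps'. subst \<sigma> p \<in> set (take i ds))"
        using r(1,3,4) by (intro bexI[of _ r]) (auto simp: case_prod_beta)
      then show ?thesis using r(2) unfolding Q_def by blast
    qed
  qed
  define S where "S i = (SOME \<sigma>. Q i \<sigma>)" for i
  have SQ: "Q i (S i)" for i unfolding S_def by (rule someI_ex[OF ex])
  have S: "wf_subst ar (S i) \<and>
      ((\<exists>A\<in>set (axioms C). ds ! i = subst (S i) A) \<or>
       (\<exists>(ps, c)\<in>set (rules C). ds ! i = subst (S i) c \<and> (\<forall>p\<in>set ps. subst (S i) p \<in> set (take i ds))))"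
    if "i < length ds" for i
    using SQ[of i] that unfolding Q_def by blast
  define sE where "sE i = list_encode (map (\<lambda>n. form_enc (S i n)) [0..<N])" for i
  define W where "W = list_encode (map (\<lambda>i. prod_encode (form_enc (ds ! i), sE i)) [0..<length ds])"
  have lenW: "len' W = length ds" by (simp add: W_def)
  have nthW: "k < length ds \<Longrightarrow> nth' W k = prod_encode (form_enc (ds ! k), sE k)" for k
    by (simp add: W_def nth'_nth)
  have sig_eq: "n < N \<Longrightarrow> sig (sE i) n = S i n" for i n
    by (simp add: sig_def sE_def)
  have SE_eq: "A \<in> FS \<Longrightarrow> SE A (sE i) = form_enc (subst (S i) A)" for A i
  proof -
    assume "A \<in> FS"
    then have "\<forall>n\<in>vars A. sig (sE i) n = S i n" using N sig_eq by blast
    then have "subst (sig (sE i)) A = subst (S i) A" by (rule subst_cong)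
    then show ?thesis unfolding SE_def by simp
  qed
  have "okS ar C W k" if k: "k < length ds" for k
  proof -
    have wfS: "wf_subst ar (S k)" using S[OF k] by blast
    have wfpart: "\<forall>i<len' (pd2 (nth' W k)). WFc ar (nth' (pd2 (nth' W k)) i) = Suc 0"
      using wfS by (simp add: nthW[OF k] sE_def nth'_nth WFc_iff wf_subst_def)
    from S[OF k] have "(\<exists>A\<in>set (axioms C). ds ! k = subst (S k) A) \<or>
       (\<exists>(ps, c)\<in>set (rules C). ds ! k = subst (S k) c \<and> (\<forall>p\<in>set ps. subst (S k) p \<in> set (take k ds)))"
      by blast
    then have "(\<exists>A\<in>set (axioms C). pd1 (nth' W k) = SE A (pd2 (nth' W k))) \<or>
     (\<exists>r\<in>set (rules C). pd1 (nth' W k) = SE (snd r) (pd2 (nth' W k)) \<and>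
        (\<forall>p\<in>set (fst r). \<exists>i<k. pd1 (nth' W i) = SE p (pd2 (nth' W k))))"
    proof
      assume "\<exists>A\<in>set (axioms C). ds ! k = subst (S k) A"
      then obtain A where A: "A \<in> set (axioms C)" "ds ! k = subst (S k) A" by blast
      then have "A \<in> FS" unfolding FS_def by blast
      then have "pd1 (nth' W k) = SE A (pd2 (nth' W k))" using A by (simp add: nthW[OF k] SE_eq)
      then show ?thesis using A(1) by blast
    next
      assume "\<exists>(ps, c)\<in>set (rules C). ds ! k = subst (S k) c \<and> (\<forall>p\<in>set ps. subst (S k) p \<in> set (take k ds))"
      then obtain ps c where r: "(ps, c) \<in> set (rules C)" "ds ! k = subst (S k) c"
        "\<forall>p\<in>set ps. subst (S k) p \<in> set (take k ds)" by blast
      have cF: "c \<in> FS" using r(1) unfolding FS_def by force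
      have c1: "pd1 (nth' W k) = SE c (pd2 (nth' W k))" using r(2) cF by (simp add: nthW[OF k] SE_eq)
      have c2: "\<forall>p\<in>set ps. \<exists>i<k. pd1 (nth' W i) = SE p (pd2 (nth' W k))"
      proof
        fix p assume p: "p \<in> set ps"
        then have pF: "p \<in> FS" using r(1) unfolding FS_def by force
        from p r(3) obtain i where i: "i < length (take k ds)" "take k ds ! i = subst (S k) p"
          by (metis in_set_conv_nth)
        then have "i < k" "ds ! i = subst (S k) p" using k by auto
        then show "\<exists>i<k. pd1 (nth' W i) = SE p (pd2 (nth' W k))"
          using k pF by (auto simp: nthW SE_eq)
      qed
      show ?thesis using r(1) c1 c2 by force
    qed
    then show ?thesis unfolding okS_def using wfpart by blast
  qed
  then have "validW ar C W" unfolding validW_def lenW by blast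
  moreover have "memW (form_enc F) W"
  proof -
    obtain k where "k < length ds" "ds ! k = F" using F by (metis in_set_conv_nth)
    then show ?thesis unfolding memW_def lenW by (auto simp: nthW)
  qed
  ultimately show ?thesis by blast
qed


definition refw :: "nat list \<Rightarrow> (nat \<Rightarrow> matrix) \<Rightarrow> nat \<Rightarrow> nat \<Rightarrow> nat \<Rightarrow> bool" where
  "refw ar M x j V \<longleftrightarrow> WFc ar x = Suc 0 \<and> DSc M j (EVc ar M x (prod_encode (j, V))) = 0"

lemma refw_sound:
  assumes L: "is_logic ar (M j)" and T: "Thm ar C \<subseteq> Taut ar (M j)" and R: "refw ar M x j V"
  shows "form_dec x \<notin> Thm ar C"
proof
  assume "form_dec x \<in> Thm ar C"
  then have Ta: "form_dec x \<in> Taut ar (M j)" using T by blast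
  have pos: "0 < nv (M j)" using L unfolding is_logic_def by simp
  have wf: "wf_form ar (form_dec x)" using R unfolding refw_def by (simp add: WFc_iff)
  have val: "valuation (M j) (valf M j V)" unfolding valuation_def using valf_lt[of M j, OF pos] by blast
  have ev: "EVc ar M x (prod_encode (j, V)) = eval (M j) (valf M j V) (form_dec x)"
    unfolding EVc_def using EV_correct[where M=M and j=j and ar=ar, OF L wf] by simp
  have "eval (M j) (valf M j V) (form_dec x) < nv (M j)"
    using eval_lt[OF L _ wf] val unfolding valuation_def by blast
  moreover have "eval (M j) (valf M j V) (form_dec x) \<in> des (M j)"
    using Ta val unfolding Taut_def satisfies_def by blast
  ultimately show False using R ev unfolding refw_def DSc_def by simp
qed

lemma refw_complete:
  assumes L: "is_logic ar (M j)" and wf: "wf_form ar F" and nT: "F \<notin> Taut ar (M j)"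
  shows "\<exists>V. refw ar M (form_enc F) j V"
proof -
  obtain v where v: "valuation (M j) v" "\<not> satisfies (M j) v F"
    using nT wf unfolding Taut_def by blast
  obtain N where N: "\<forall>n\<in>vars F. n < N" using finite_vars[of F] finite_nat_set_iff_bounded by blast
  define V where "V = list_encode (map v [0..<N])"
  have "\<forall>n\<in>vars F. valf M j V n = v n"
    using N v(1) unfolding valuation_def by (auto simp: valf_def V_def nth'_nth)
  then have e: "eval (M j) (valf M j V) F = eval (M j) v F" by (rule eval_cong)
  have ev: "EVc ar M (form_enc F) (prod_encode (j, V)) = eval (M j) v F"
    unfolding EVc_def using EV_correct[where M=M and j=j and ar=ar, OF L wf] e by simp
  have "DSc M j (eval (M j) v F) = 0" using v(2) unfolding DSc_def satisfies_def by simp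
  then have "refw ar M (form_enc F) j V"
    unfolding refw_def using ev wf by (simp add: WFc_iff)
  then show ?thesis by blast
qed


lemma img_iff: "x \<in> form_enc ` T \<longleftrightarrow> form_dec x \<in> T"
  by (metis form_dec_enc form_enc_dec image_iff)

theorem corollary3:
  fixes ar :: "nat list" and C :: calc
  assumes "calculus ar C"
    and "\<not> decidable (form_enc ` Thm ar C)"
  shows "\<not> effectively_approximable ar C"
proof
  assume "effectively_approximable ar C"
  then obtain M where es: "effective_seq ar M" and cov: "\<forall>j. cover ar C (M j)"
    and eq: "Thm ar C = (\<Inter>j. Taut ar (M j))"
    unfolding effectively_approximable_def by blast
  from es obtain r1 r2 r3 where R1: "\<forall>i. rec_eval r1 [i] (nv (M i))"
    and R2: "\<forall>i x. x < nv (M i) \<longrightarrow> rec_eval r2 [i, x] (if x \<in> des (M i) then 1 else 0)"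
    and R3: "\<forall>i c xs. c < length ar \<and> length xs = ar ! c \<and> set xs \<subseteq> {..<nv (M i)} \<longrightarrow>
          rec_eval r3 [i, c, list_encode xs] (tf (M i) c xs)"
    unfolding effective_seq_def by blast
  have NV: "rc1 (\<lambda>j. nv (M j))" unfolding rc1_def using R1 by blast
  have L: "is_logic ar (M j)" for j using cov unfolding cover_def by blast
  have pos: "\<forall>j. 0 < nv (M j)" using L unfolding is_logic_def by (simp add: Suc_le_eq)
  have T: "Thm ar C \<subseteq> Taut ar (M j)" for j using eq by blast
  define G where "G z \<longleftrightarrow>
     (pd1 (pd2 z) = 0 \<and> validW ar C (pd2 (pd2 z)) \<and> memW (pd1 z) (pd2 (pd2 z))) \<or>
     (pd1 (pd2 z) = 1 \<and> refw ar M (pd1 z) (pd1 (pd2 (pd2 z))) (pd2 (pd2 (pd2 z)))) \<or>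
     (pd1 (pd2 z) = 2 \<and> WFc ar (pd1 z) \<noteq> Suc 0)" for z
  have ev: "rc1 (\<lambda>z. EVc ar M (pd1 z) (prod_encode (pd1 (pd2 (pd2 z)), pd2 (pd2 (pd2 z)))))"
    by (rule rc1_comp'[OF rc1_EVc[OF NV pos R3], of "\<lambda>z. prod_encode (pd1 z, pd2 (pd2 z))"])
       (intro rc1_pe rc1_pd1 rc1_pd2 rc1_id, simp)
  have ds: "rc1 (\<lambda>z. DSc M (pd1 (pd2 (pd2 z)))
      (EVc ar M (pd1 z) (prod_encode (pd1 (pd2 (pd2 z)), pd2 (pd2 (pd2 z))))))"
    by (rule rc1_comp'[OF rc1_DSc[OF NV pos R2], of "\<lambda>z. prod_encode (pd1 (pd2 (pd2 z)),
        EVc ar M (pd1 z) (prod_encode (pd1 (pd2 (pd2 z)), pd2 (pd2 (pd2 z)))))"])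
       (intro rc1_pe rc1_pd1 rc1_pd2 rc1_id ev, simp)
  have rG: "rcp G"
    unfolding G_def refw_def
    by (intro rcp_or rcp_and rcp_eq rcp_not rcp_validW rcp_memW rc1_WFc' ds rc1_pd1 rc1_pd2 rc1_id rc1_const)
  have wit: "\<exists>w. G (prod_encode (x, w))" for x
  proof (cases "form_dec x \<in> Thm ar C")
    case True
    then obtain W where "validW ar C W" "memW (form_enc (form_dec x)) W" using W_complete by blast
    then have "G (prod_encode (x, prod_encode (0, W)))" unfolding G_def by simp
    then show ?thesis by blast
  next
    case False
    show ?thesis
    proof (cases "wf_form ar (form_dec x)")
      case False
      then have "G (prod_encode (x, prod_encode (2, 0)))" unfolding G_def by (simp add: WFc_iff)
      then show ?thesis by blast
    next
      case True
      from \<open>form_dec x \<notin> Thm ar C\<close> obtain j where "form_dec x \<notin> Taut ar (M j)" using eq by blast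
      from refw_complete[where M=M and j=j, OF L True this] obtain V where "refw ar M x j V" by auto
      then have "G (prod_encode (x, prod_encode (1, prod_encode (j, V))))" unfolding G_def by simp
      then show ?thesis by blast
    qed
  qed
  define f where "f x w = (if G (prod_encode (x, w)) then 0 else (1::nat))" for x w
  have rf: "rc1 (\<lambda>z. f (pd1 z) (pd2 z))"
    unfolding f_def by (simp add: rc1_if rG[unfolded rcp_def] rc1_const rcp_def[symmetric] rG)
  have rL: "rc1 (\<lambda>x. LEAST w. f x w = 0)"
    by (rule rc1_mn[OF rf]) (use wit in \<open>auto simp: f_def\<close>)
  define Dc where "Dc x = (if pd1 (LEAST w. f x w = 0) = 0 then 1 else (0::nat))" for x
  have rD: "rc1 Dc" unfolding Dc_def by (intro rc1_if rcp_eq rc1_pd1 rL rc1_const)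
  have Dc_eq: "Dc x = (if x \<in> form_enc ` Thm ar C then 1 else 0)" for x
  proof -
    define w where "w = (LEAST w. f x w = 0)"
    have "f x w = 0" unfolding w_def by (rule LeastI_ex) (use wit in \<open>auto simp: f_def\<close>)
    then have g: "G (prod_encode (x, w))" by (simp add: f_def split: if_splits)
    show ?thesis
    proof (cases "pd1 w = 0")
      case True
      then have "validW ar C (pd2 w) \<and> memW x (pd2 w)" using g unfolding G_def by simp
      then have "form_dec x \<in> Thm ar C" using W_sound by blast
      then show ?thesis using True by (simp add: Dc_def w_def[symmetric] img_iff)
    next
      case False
      have "form_dec x \<notin> Thm ar C"
      proof (cases "pd1 w = 1")
        case True
        then have "refw ar M x (pd1 (pd2 w)) (pd2 (pd2 w))" using g unfolding G_def by simp
        then show ?thesis using refw_sound[where M=M and j="pd1 (pd2 w)", OF L T] by blast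
      next
        case False
        then have "\<not> wf_form ar (form_dec x)" using g \<open>pd1 w \<noteq> 0\<close> unfolding G_def by (simp add: WFc_iff)
        then show ?thesis using T[of 0] unfolding Taut_def by blast
      qed
      then show ?thesis using False by (simp add: Dc_def w_def[symmetric] img_iff)
    qed
  qed
  have "decidable (form_enc ` Thm ar C)"
    using rD unfolding decidable_def rc1_def Dc_eq by blast
  then show False using assms(2) by blast
qed


end
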